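(* Suppose the Drift Assumption holds and let $1<p\le2$. Define $\Psi(x)=\Phi(x)^{p/2}$. Then $\Psi$ is differentiable (with $\nabla\Psi(0)=0$), and there exist constants $\eta_p,L_p>0$ such that, with $a_1=c_1^{p/2}$, $a_2=c_2^{p/2}$, for all $x,y\in\mathbb{R}^d$: (1) $a_1\|x-x^\star\|^p\le\Psi(x-x^\star)\le a_2\|x-x^\star\|^p$; (2) $\langle\nabla\Psi(x-x^\star),H(x)-x\rangle\le-\eta_p\Psi(x-x^\star)$ (one can take $\eta_p=\tfrac p2\eta$); (3) $\Psi(x)\le\Psi(y)+\langle\nabla\Psi(y),x-y\rangle+\frac{L_p}{p}\|x-y\|^p$.
   Context: Let $\|\cdot\|$ denote the Euclidean norm on $\mathbb{R}^d$ and $\langle\cdot,\cdot\rangle$ the Euclidean inner product; $H:\mathbb{R}^d\to\mathbb{R}^d$. Drift Assumption: there is $x^\star\in\mathbb{R}^d$ with $H(x^\star)=x^\star$, a differentiable function $\Phi:\mathbb{R}^d\to[0,\infty)$ and constants $\eta,c_1,c_2,L_2>0$ such that (i) $\langle\nabla\Phi(x-x^\star),H(x)-x\rangle\le-\eta\,\Phi(x-x^\star)$ for all $x\in\mathbb{R}^d$; (ii) $\Phi(y)\le\Phi(x)+\langle\nabla\Phi(x),y-x\rangle+\frac{L_2}{2}\|y-x\|^2$ for all $x,y\in\mathbb{R}^d$; (iii) $c_1\|x-x^\star\|^2\le\Phi(x-x^\star)\le c_2\|x-x^\star\|^2$ for all $x\in\mathbb{R}^d$. *)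

theory Defs
  imports "HOL-Analysis.Analysis"
begin

end

theory Submission
  imports Defs
begin


lemma concave_pow:
  fixes a b q :: real
  assumes "a > 0" "b \<ge> 0" "0 < q" "q \<le> 1"
  shows "b powr q \<le> a powr q + q * a powr (q-1) * (b - a)"
proof (cases "b = 0")
  case True
  have "a powr (q-1) * a = a powr q"
    using assms(1) by (simp add: powr_diff)
  then show ?thesis using True assms
    by (simp add: algebra_simps)
next
  case False
  then have bpos: "b > 0" using assms by simp
  have Y: "b powr q * a powr (1-q) \<le> q * b + (1-q) * a"
    using Youngs_inequality_0[of q "1-q" b a] assms bpos by simp
  have m: "0 \<le> a powr (q-1)" by simp
  have e: "a powr (q-1) * a = a powr q"
    using assms(1) by (simp add: powr_diff)
  have "b powr q = (b powr q * a powr (1-q)) * a powr (q-1)"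
    using assms(1) by (simp add: mult.assoc flip: powr_add)
  also have "\<dots> \<le> (q * b + (1-q) * a) * a powr (q-1)"
    using Y m by (rule mult_right_mono)
  also have "\<dots> = q * b * a powr (q-1) + (1-q) * (a powr (q-1) * a)"
    by (simp add: algebra_simps)
  finally have "b powr q \<le> q * b * a powr (q-1) + (1-q) * (a powr (q-1) * a)" .
  moreover have "a powr q + q * a powr (q-1) * (b - a) = q * b * a powr (q-1) + (1-q) * (a powr (q-1) * a)"
    by (simp add: algebra_simps e[symmetric])
  ultimately show ?thesis by linarith
qed

lemma sq_powr: fixes r t :: real assumes "r > 0" shows "(r\<^sup>2) powr t = r powr (2*t)"
proof -
  have "r\<^sup>2 = r powr 2" using assms by simp
  then show ?thesis by (simp add: powr_powr)
qed
lemma sq_powr_mul: fixes r t :: real assumes "r > 0" shows "(r\<^sup>2) powr t * r\<^sup>2 = r powr (2*t + 2)"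
proof -
  have "r\<^sup>2 = r powr 2" using assms by simp
  then show ?thesis using sq_powr[OF assms, of t] by (simp add: powr_add)
qed
lemma sq_powr_mul1: fixes r t :: real assumes "r > 0" shows "(r\<^sup>2) powr t * r = r powr (2*t + 1)"
  using sq_powr[OF assms, of t] assms by (simp add: powr_add)

lemma holder_core:
  fixes a b r G N L q :: real
  assumes a: "a \<ge> 0" and b: "b \<ge> 0" and r: "r \<ge> 0" and L: "L > 0"
    and q: "1/2 < q" "q \<le> 1"
    and sm: "b \<le> a + G + L/2 * r\<^sup>2"
    and G: "\<bar>G\<bar> \<le> N * r" and N: "N \<ge> 0" "N\<^sup>2 \<le> 2 * L * a"
  shows "b powr q \<le> a powr q + q * a powr (q-1) * G
           + (q * L / 2 + (1 + sqrt (2*L) + L/2) powr q + q * sqrt (2*L)) * r powr (2*q)"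
proof -
  define K where "K = 1 + sqrt (2*L) + L/2"
  have Kpos: "K > 0" unfolding K_def using L by (simp add: add_pos_nonneg)
  have Nle: "N \<le> sqrt (2*L) * sqrt a"
    using N by (metis real_sqrt_abs real_sqrt_le_mono real_sqrt_mult abs_of_nonneg power2_eq_square real_sqrt_mult_self)
  have rp: "r powr (2*q) \<ge> 0" by simp
  have aq: "a powr q \<ge> 0" by simp
  show ?thesis
  proof (cases "a > r\<^sup>2")
    case True
    then have apos: "a > 0" using r by (smt (verit) zero_le_power2)
    have c1: "b powr q \<le> a powr q + q * a powr (q-1) * (b - a)"
      using concave_pow[OF apos b] q by simp
    have c2: "q * a powr (q-1) * (b - a) \<le> q * a powr (q-1) * (G + L/2 * r\<^sup>2)"
      using sm q by (intro mult_left_mono) auto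
    have c3: "q * a powr (q-1) * (L/2 * r\<^sup>2) \<le> q * L / 2 * r powr (2*q)"
    proof (cases "r = 0")
      case True then show ?thesis using q by simp
    next
      case False
      then have rpos: "r > 0" using r by simp
      have "a powr (q-1) \<le> (r\<^sup>2) powr (q-1)"
        using powr_mono2'[of "q-1" "r\<^sup>2" a] q True rpos by simp
      then have "a powr (q-1) * r\<^sup>2 \<le> (r\<^sup>2) powr (q-1) * r\<^sup>2"
        by (simp add: mult_right_mono)
      also have "(r\<^sup>2) powr (q-1) * r\<^sup>2 = r powr (2*q)"
        using sq_powr_mul[OF rpos, of "q-1"] by simp
      finally have "a powr (q-1) * r\<^sup>2 \<le> r powr (2*q)" .
      then have "q * L / 2 * (a powr (q-1) * r\<^sup>2) \<le> q * L / 2 * r powr (2*q)"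
        using q L by (intro mult_left_mono) auto
      then show ?thesis by (simp add: algebra_simps)
    qed
    have k: "0 \<le> K powr q * r powr (2*q) + q * sqrt (2*L) * r powr (2*q)"
      using q L by (intro add_nonneg_nonneg mult_nonneg_nonneg) auto
    have d1: "q * a powr (q-1) * (G + L/2 * r\<^sup>2) = q * a powr (q-1) * G + q * a powr (q-1) * (L/2 * r\<^sup>2)"
      by (rule distrib_left)
    have d2: "(q * L / 2 + K powr q + q * sqrt (2*L)) * r powr (2*q) = q * L / 2 * r powr (2*q) + K powr q * r powr (2*q) + q * sqrt (2*L) * r powr (2*q)"
      by (simp only: distrib_right)
    show ?thesis unfolding K_def[symmetric] using c1 c2 c3 k d1 d2 by linarith
  next
    case False
    then have ar: "a \<le> r\<^sup>2" by simp
    have sa: "sqrt a \<le> r" using ar r by (metis real_sqrt_le_mono real_sqrt_abs abs_of_nonneg)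
    have bK: "b \<le> K * r\<^sup>2"
    proof -
      have "G \<le> N * r" using G by simp
      also have "\<dots> \<le> sqrt (2*L) * sqrt a * r" using Nle r by (simp add: mult_right_mono)
      also have "\<dots> \<le> sqrt (2*L) * r * r" using sa r L by (intro mult_right_mono mult_left_mono) auto
      finally have "G \<le> sqrt (2*L) * r\<^sup>2" by (simp add: power2_eq_square mult.assoc)
      then show ?thesis using sm ar unfolding K_def by (simp add: algebra_simps)
    qed
    have t1: "b powr q \<le> K powr q * r powr (2*q)"
    proof -
      have "b powr q \<le> (K * r\<^sup>2) powr q" using bK b q by (intro powr_mono2) auto
      also have "\<dots> = K powr q * r powr (2*q)"
        using Kpos r sq_powr[of r q] by (cases "r = 0") (auto simp: powr_mult)
      finally show ?thesis .
    qed
    have t2: "- (q * a powr (q-1) * G) \<le> q * sqrt (2*L) * r powr (2*q)"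
    proof (cases "a = 0")
      case True then show ?thesis using q L by simp
    next
      case False
      then have apos: "a > 0" using a by simp
      then have rpos: "r > 0" using sa by (smt (verit) real_sqrt_gt_zero)
      have ab: "\<bar>G\<bar> \<le> sqrt (2*L) * sqrt a * r" using G mult_right_mono[OF Nle r] by linarith
      have m0: "0 \<le> q * a powr (q-1)" using q by simp
      have "- G \<le> \<bar>G\<bar>" by simp
      then have s1: "q * a powr (q-1) * (- G) \<le> q * a powr (q-1) * \<bar>G\<bar>" using m0 by (rule mult_left_mono)
      have s2: "q * a powr (q-1) * \<bar>G\<bar> \<le> q * a powr (q-1) * (sqrt (2*L) * sqrt a * r)"
        using ab m0 by (rule mult_left_mono)
      have e1: "a powr (q-1) * sqrt a = a powr (q - 1/2)"
        using apos by (simp add: powr_half_sqrt[symmetric] flip: powr_add)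
      have s3: "a powr (q - 1/2) \<le> (r\<^sup>2) powr (q - 1/2)"
        using ar a q by (intro powr_mono2) auto
      have e2: "(r\<^sup>2) powr (q - 1/2) * r = r powr (2*q)"
        using sq_powr_mul1[OF rpos, of "q - 1/2"] by simp
      have "q * a powr (q-1) * (sqrt (2*L) * sqrt a * r) = q * sqrt (2*L) * (a powr (q-1) * sqrt a) * r"
        by (simp only: ac_simps)
      also have "\<dots> = q * sqrt (2*L) * a powr (q - 1/2) * r" by (simp only: e1)
      also have "\<dots> \<le> q * sqrt (2*L) * (r\<^sup>2) powr (q - 1/2) * r"
        using q L r s3 by (intro mult_right_mono mult_left_mono) auto
      also have "\<dots> = q * sqrt (2*L) * r powr (2*q)" using e2 by (simp only: mult.assoc)
      finally have s4: "q * a powr (q-1) * (sqrt (2*L) * sqrt a * r) \<le> q * sqrt (2*L) * r powr (2*q)" .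
      have "- (q * a powr (q-1) * G) = q * a powr (q-1) * (- G)" by simp
      then show ?thesis using s1 s2 s4 by linarith
    qed
    have k: "0 \<le> q * L / 2 * r powr (2*q)" using q L by simp
    have d2: "(q * L / 2 + K powr q + q * sqrt (2*L)) * r powr (2*q) = q * L / 2 * r powr (2*q) + K powr q * r powr (2*q) + q * sqrt (2*L) * r powr (2*q)"
      by (simp only: distrib_right)
    have "- (q * a powr (q-1) * G) = q * a powr (q-1) * (- G)" by simp
    show ?thesis unfolding K_def[symmetric] using t1 t2 k aq d2 by linarith
  qed
qed



lemma norm_mult_self_eq_inner: "norm (g::'a::real_inner) * norm g = g \<bullet> g"
  by (simp add: power2_norm_eq_inner[symmetric] power2_eq_square)

lemma cr_powr:
  fixes c r q :: real
  assumes "c \<ge> 0" "r \<ge> 0"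
  shows "(c * r\<^sup>2) powr q = c powr q * r powr (2*q)"
proof (cases "r = 0")
  case True then show ?thesis by simp
next
  case False
  then have "r > 0" using assms by simp
  then show ?thesis using assms by (simp add: powr_mult sq_powr)
qed

lemma powr_m1_mult:
  fixes a q :: real
  assumes "a \<ge> 0"
  shows "a powr (q-1) * a = a powr q"
  using assms by (cases "a = 0") (auto simp: powr_diff)

theorem proposition2:
  fixes H :: "'a::euclidean_space \<Rightarrow> 'a"
    and Phi :: "'a \<Rightarrow> real"
    and gradPhi :: "'a \<Rightarrow> 'a"
    and xstar :: 'a
    and \<eta> c1 c2 L2 p :: real
  assumes fix_pt: "H xstar = xstar"
    and Phi_nonneg: "\<And>x. Phi x \<ge> 0"
    and Phi_grad: "\<And>x. (Phi has_derivative (\<lambda>h. gradPhi x \<bullet> h)) (at x)"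
    and consts_pos: "\<eta> > 0" "c1 > 0" "c2 > 0" "L2 > 0"
    and drift: "\<And>x. gradPhi (x - xstar) \<bullet> (H x - x) \<le> - \<eta> * Phi (x - xstar)"
    and smooth: "\<And>x y. Phi y \<le> Phi x + gradPhi x \<bullet> (y - x) + L2 / 2 * (norm (y - x))\<^sup>2"
    and equiv: "\<And>x. c1 * (norm (x - xstar))\<^sup>2 \<le> Phi (x - xstar)"
               "\<And>x. Phi (x - xstar) \<le> c2 * (norm (x - xstar))\<^sup>2"
    and p: "1 < p" "p \<le> 2"
  defines "Psi \<equiv> (\<lambda>x. Phi x powr (p / 2))"
  shows "\<exists>gradPsi :: 'a \<Rightarrow> 'a.
           (\<forall>x. (Psi has_derivative (\<lambda>h. gradPsi x \<bullet> h)) (at x)) \<and>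
           gradPsi 0 = 0 \<and>
           (\<exists>\<eta>p Lp. \<eta>p > 0 \<and> Lp > 0 \<and> \<eta>p = p / 2 * \<eta> \<and>
             (\<forall>x. c1 powr (p/2) * norm (x - xstar) powr p \<le> Psi (x - xstar) \<and>
                  Psi (x - xstar) \<le> c2 powr (p/2) * norm (x - xstar) powr p) \<and>
             (\<forall>x. gradPsi (x - xstar) \<bullet> (H x - x) \<le> - \<eta>p * Psi (x - xstar)) \<and>
             (\<forall>x y. Psi x \<le> Psi y + gradPsi y \<bullet> (x - y) + Lp / p * norm (x - y) powr p))"
  proof -
  define q where "q = p/2"
  have q: "1/2 < q" "q \<le> 1" "0 < q" using p unfolding q_def by auto
  have p2q: "p = 2*q" unfolding q_def by simp
  have PsiE: "\<And>x. Psi x = Phi x powr q" unfolding Psi_def q_def by simp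
  have F1: "\<And>z. c1 * (norm z)\<^sup>2 \<le> Phi z" using equiv(1) by (metis add_diff_cancel_right')
  have F2: "\<And>z. Phi z \<le> c2 * (norm z)\<^sup>2" using equiv(2) by (metis add_diff_cancel_right')
  have Phi0: "Phi 0 = 0" using F2[of 0] Phi_nonneg[of 0] by simp
  have Phipos: "\<And>z. z \<noteq> 0 \<Longrightarrow> Phi z > 0"
  proof -
    fix z :: 'a assume "z \<noteq> 0"
    then have "c1 * (norm z)\<^sup>2 > 0" using consts_pos by simp
    then show "Phi z > 0" using F1[of z] by linarith
  qed
  have gb: "(norm (gradPhi y))\<^sup>2 \<le> 2 * L2 * Phi y" for y
  proof -
    define g where "g = gradPhi y"
    have "0 \<le> Phi (y - (1/L2) *\<^sub>R g)" by (rule Phi_nonneg)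
    also have "\<dots> \<le> Phi y + g \<bullet> (y - (1/L2) *\<^sub>R g - y) + L2/2 * (norm (y - (1/L2) *\<^sub>R g - y))\<^sup>2"
      using smooth unfolding g_def by blast
    also have "\<dots> = Phi y - (norm g)\<^sup>2 / (2*L2)"
      using consts_pos norm_mult_self_eq_inner[of g] by (simp add: power2_norm_eq_inner power2_eq_square field_simps)
    finally show ?thesis unfolding g_def[symmetric] using consts_pos by (simp add: field_simps)
  qed
  define gradPsi where "gradPsi y = (q * Phi y powr (q-1)) *\<^sub>R gradPhi y" for y
  have gP0: "gradPsi 0 = 0" unfolding gradPsi_def using Phi0 by simp
  have deriv: "(Psi has_derivative (\<lambda>h. gradPsi x \<bullet> h)) (at x)" for x
  proof (cases "x = 0")
    case False
    then have pos: "Phi x > 0" by (rule Phipos)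
    have "((\<lambda>x. Phi x powr (\<lambda>_. q) x) has_derivative
           (\<lambda>h. (Phi x powr (\<lambda>_. q) x) * ((\<lambda>_. 0) h * ln (Phi x) + (gradPhi x \<bullet> h) * (\<lambda>_. q) x / Phi x))) (at x)"
      by (rule has_derivative_powr[OF Phi_grad _ pos]) auto
    then have "((\<lambda>x. Phi x powr q) has_derivative
           (\<lambda>h. (Phi x powr q) * ((gradPhi x \<bullet> h) * q / Phi x))) (at x)" by simp
    moreover have "(\<lambda>h. (Phi x powr q) * ((gradPhi x \<bullet> h) * q / Phi x)) = (\<lambda>h. gradPsi x \<bullet> h)"
    proof
      fix h
      have e: "Phi x powr q = Phi x powr (q-1) * Phi x" using powr_m1_mult[of "Phi x" q] pos by simp
      show "(Phi x powr q) * ((gradPhi x \<bullet> h) * q / Phi x) = gradPsi x \<bullet> h"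
        unfolding gradPsi_def e using pos by (simp add: field_simps)
    qed
    ultimately show ?thesis unfolding PsiE[abs_def] by simp
  next
    case True
    have "(Psi has_derivative (\<lambda>h. 0)) (at 0)"
      unfolding has_derivative_iff_norm
    proof (intro conjI)
      show "bounded_linear (\<lambda>h::'a. 0::real)" by (rule bounded_linear_zero)
      have lim: "((\<lambda>y::'a. c2 powr q * norm y powr (p-1)) \<longlongrightarrow> 0) (at 0)"
        using p by (intro tendsto_mult_right_zero tendsto_zero_powrI tendsto_norm_zero tendsto_ident_at) auto
      show "((\<lambda>y. norm (Psi y - Psi 0 - 0) / norm (y - 0)) \<longlongrightarrow> 0) (at 0)"
      proof (rule tendsto_sandwich[OF _ _ tendsto_const lim])
        show "\<forall>\<^sub>F y in at (0::'a). 0 \<le> norm (Psi y - Psi 0 - 0) / norm (y - 0)" by simp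
        show "\<forall>\<^sub>F y in at (0::'a). norm (Psi y - Psi 0 - 0) / norm (y - 0) \<le> c2 powr q * norm y powr (p-1)"
        proof (rule eventually_at_topological[THEN iffD2], intro exI[of _ UNIV] conjI ballI impI)
          fix y :: 'a assume "y \<noteq> 0"
          then have ny: "norm y > 0" by simp
          have "Psi y \<le> (c2 * (norm y)\<^sup>2) powr q"
            unfolding PsiE using F2[of y] Phi_nonneg[of y] q by (intro powr_mono2) auto
          also have "\<dots> = c2 powr q * norm y powr p"
            using cr_powr[of c2 "norm y" q] consts_pos p2q by simp
          finally have "Psi y / norm y \<le> c2 powr q * norm y powr p / norm y"
            using ny by (simp add: divide_right_mono)
          also have "\<dots> = c2 powr q * norm y powr (p-1)"
            using ny by (simp add: powr_diff)
          finally show "norm (Psi y - Psi 0 - 0) / norm (y - 0) \<le> c2 powr q * norm y powr (p-1)"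
            using Phi0 Phi_nonneg[of y] by (simp add: PsiE)
        qed auto
      qed
    qed
    then show ?thesis using True gP0 by simp
  qed
  define C where "C = q * L2 / 2 + (1 + sqrt (2*L2) + L2/2) powr q + q * sqrt (2*L2)"
  have Cpos: "C > 0" unfolding C_def using q consts_pos by (intro add_pos_nonneg) auto
  have P1: "\<forall>x. c1 powr (p/2) * norm (x - xstar) powr p \<le> Psi (x - xstar) \<and>
                  Psi (x - xstar) \<le> c2 powr (p/2) * norm (x - xstar) powr p"
  proof
    fix x
    let ?z = "x - xstar"
    have "(c1 * (norm ?z)\<^sup>2) powr q \<le> Phi ?z powr q"
      using F1[of ?z] consts_pos q by (intro powr_mono2) auto
    then have A: "c1 powr (p/2) * norm ?z powr p \<le> Psi ?z"
      using cr_powr[of c1 "norm ?z" q] consts_pos p2q by (simp add: PsiE p2q)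
    have "Phi ?z powr q \<le> (c2 * (norm ?z)\<^sup>2) powr q"
      using F2[of ?z] Phi_nonneg q by (intro powr_mono2) auto
    then have B: "Psi ?z \<le> c2 powr (p/2) * norm ?z powr p"
      using cr_powr[of c2 "norm ?z" q] consts_pos p2q by (simp add: PsiE p2q)
    show "c1 powr (p/2) * norm ?z powr p \<le> Psi ?z \<and> Psi ?z \<le> c2 powr (p/2) * norm ?z powr p"
      using A B by blast
  qed
  have P2: "\<forall>x. gradPsi (x - xstar) \<bullet> (H x - x) \<le> - (p/2*\<eta>) * Psi (x - xstar)"
  proof
    fix x
    let ?z = "x - xstar"
    have nn: "0 \<le> q * Phi ?z powr (q-1)" using q by simp
    have "gradPsi ?z \<bullet> (H x - x) = q * Phi ?z powr (q-1) * (gradPhi ?z \<bullet> (H x - x))"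
      unfolding gradPsi_def by simp
    also have "\<dots> \<le> q * Phi ?z powr (q-1) * (- \<eta> * Phi ?z)"
      using drift nn by (rule mult_left_mono)
    also have "\<dots> = - (q * \<eta>) * (Phi ?z powr (q-1) * Phi ?z)" by (simp add: algebra_simps)
    also have "\<dots> = - (p/2*\<eta>) * Psi ?z"
      using powr_m1_mult[OF Phi_nonneg[of ?z], of q] p2q by (simp add: PsiE)
    finally show "gradPsi ?z \<bullet> (H x - x) \<le> - (p/2*\<eta>) * Psi ?z" .
  qed
  have P3: "\<forall>x y. Psi x \<le> Psi y + gradPsi y \<bullet> (x - y) + p*C / p * norm (x - y) powr p"
  proof (intro allI)
    fix x y
    have G: "\<bar>gradPhi y \<bullet> (x - y)\<bar> \<le> norm (gradPhi y) * norm (x - y)"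
      by (rule Cauchy_Schwarz_ineq2)
    have "Phi x powr q \<le> Phi y powr q + q * Phi y powr (q-1) * (gradPhi y \<bullet> (x - y)) + C * norm (x - y) powr (2*q)"
      unfolding C_def
      by (rule holder_core[OF Phi_nonneg Phi_nonneg norm_ge_zero _ q(1,2) smooth G norm_ge_zero gb]) (use consts_pos in simp)
    then show "Psi x \<le> Psi y + gradPsi y \<bullet> (x - y) + p*C / p * norm (x - y) powr p"
      using p by (simp add: PsiE gradPsi_def p2q)
  qed
  have P0: "p/2*\<eta> > 0" "p*C > 0" using p consts_pos Cpos by auto
  show ?thesis
  proof (rule exI[of _ gradPsi], intro conjI)
    show "\<forall>x. (Psi has_derivative (\<lambda>h. gradPsi x \<bullet> h)) (at x)" using deriv by blast
    show "gradPsi 0 = 0" by (rule gP0)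
    show "\<exists>\<eta>p Lp. \<eta>p > 0 \<and> Lp > 0 \<and> \<eta>p = p / 2 * \<eta> \<and>
             (\<forall>x. c1 powr (p/2) * norm (x - xstar) powr p \<le> Psi (x - xstar) \<and>
                  Psi (x - xstar) \<le> c2 powr (p/2) * norm (x - xstar) powr p) \<and>
             (\<forall>x. gradPsi (x - xstar) \<bullet> (H x - x) \<le> - \<eta>p * Psi (x - xstar)) \<and>
             (\<forall>x y. Psi x \<le> Psi y + gradPsi y \<bullet> (x - y) + Lp / p * norm (x - y) powr p)"
      apply (rule exI[of _ "p/2*\<eta>"], rule exI[of _ "p*C"])
      apply (intro conjI)
           apply (rule P0(1))
          apply (rule P0(2))
         apply (rule refl)
        apply (rule P1)
       apply (rule P2)
      apply (rule P3)
      done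
  qed
qed

end
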